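(* For every integer $a\geq 2$, $$\sigma(2a-1,2)=-a\,2^{2a-1}\lambda(2a+1)+\frac{2^{2a-1}(2a+1)}{3}\lambda(2)\lambda(2a-1)+\sum_{j=1}^{a-2}j\,2^{2j}\lambda(2j+1)\zeta(2a-2j),$$ where an empty sum equals $0$.
   Context: For integers $t\geq 1$ and $n\geq 1$ let $S_n^{(t)}=\sum_{k=1}^{n}\frac{1}{(2k-1)^t}$, and for integers $s\geq 2$, $t\geq 1$ let $\sigma(s,t)=\sum_{n\geq 1}\frac{S_n^{(t)}}{n^s}$. For real $s>1$, $\lambda(s)=\sum_{n\geq 1}\frac{1}{(2n-1)^s}=(1-2^{-s})\zeta(s)$, and $\zeta$ is the Riemann zeta function. *)

theory Defs
  imports "HOL-Analysis.Analysis"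
begin

definition zeta :: "real \<Rightarrow> real" where
  "zeta s = (\<Sum>n. 1 / (real (Suc n)) powr s)"

text \<open>lambda(s) = sum over odd n of n^(-s) = (1 - 2^(-s)) zeta(s).\<close>
definition dlambda :: "real \<Rightarrow> real" where
  "dlambda s = (\<Sum>n. 1 / (2 * real n + 1) powr s)"

definition S_odd :: "nat \<Rightarrow> nat \<Rightarrow> real" where
  "S_odd t n = (\<Sum>k=1..n. 1 / (2 * real k - 1) ^ t)"

definition sigma :: "nat \<Rightarrow> nat \<Rightarrow> real" where
  "sigma s t = (\<Sum>n. S_odd t (Suc n) / real (Suc n) ^ s)"

end

theory Submission
  imports Defs
begin

lemma swap_sums:
  fixes h :: "nat \<Rightarrow> nat \<Rightarrow> real"
  assumes nn: "\<And>n m. h n m \<ge> 0" and hs: "\<And>n. (h n) sums r n" and rs: "summable r"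
  shows "(\<lambda>m. \<Sum>n. h n m) sums (suminf r)" and "\<And>m. summable (\<lambda>n. h n m)"
proof -
  have hh: "((\<lambda>m. h n m) has_sum r n) UNIV" for n
    using sums_nonneg_imp_has_sum[OF hs[of n]] nn by auto
  have rn: "r n \<ge> 0" for n using hs[of n] nn by (metis sums_unique suminf_nonneg sums_summable)
  have rh: "(r has_sum suminf r) UNIV"
    using sums_nonneg_imp_has_sum[of r] rs rn summable_sums by blast
  have su: "(\<lambda>(n,m). h n m) summable_on Sigma UNIV (\<lambda>_. UNIV)"
    by (rule summable_on_SigmaI[where g=r]) (use hh rh nn in \<open>auto simp: summable_on_def\<close>)
  have hs2: "((\<lambda>(n,m). h n m) has_sum suminf r) (Sigma UNIV (\<lambda>_. UNIV))"
    by (rule has_sum_SigmaI[where g=r]) (use hh rh su in auto)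
  have hs3: "((\<lambda>(m,n). h n m) has_sum suminf r) (UNIV \<times> UNIV)"
    using hs2 has_sum_swap[where f="\<lambda>(n,m). h n m" and A=UNIV and B=UNIV] by (simp add: case_prod_unfold)
  have sm: "(\<lambda>n. h n m) summable_on UNIV" for m
    using summable_on_SigmaD1[of "\<lambda>m n. h n m" UNIV "\<lambda>_. UNIV" m] hs3
    by (auto simp: summable_on_def)
  have hm: "((\<lambda>n. h n m) has_sum (\<Sum>n. h n m)) UNIV" for m
  proof -
    have "((\<lambda>n. h n m) has_sum infsum (\<lambda>n. h n m) UNIV) UNIV"
      using sm summable_iff_has_sum_infsum by blast
    moreover have "(\<lambda>n. h n m) sums infsum (\<lambda>n. h n m) UNIV"
      using has_sum_imp_sums calculation by blast
    ultimately show ?thesis using sums_unique by metis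
  qed
  have "((\<lambda>m. \<Sum>n. h n m) has_sum suminf r) UNIV"
    by (rule has_sum_SigmaD[OF hs3[unfolded Sigma_def[symmetric]]]) (use hm in auto)
  thus "(\<lambda>m. \<Sum>n. h n m) sums (suminf r)" by (rule has_sum_imp_sums)
  show "summable (\<lambda>n. h n m)" for m using sm[of m] by (rule summable_on_imp_summable)
qed

lemma summ_suc: "k \<ge> 2 \<Longrightarrow> summable (\<lambda>n. 1 / real (Suc n) ^ k)"
proof -
  assume k: "k \<ge> 2"
  have "summable (\<lambda>n. inverse (real n ^ k))" by (rule inverse_power_summable[OF k])
  hence "summable (\<lambda>n. inverse (real (Suc n) ^ k))" by (subst summable_Suc_iff)
  thus ?thesis by (simp add: divide_inverse)
qed

lemma sumZ: "k \<ge> 2 \<Longrightarrow> (\<lambda>n. 1 / real (Suc n) ^ k) sums zeta (real k)"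
proof -
  assume k: "k \<ge> 2"
  have "zeta (real k) = (\<Sum>n. 1 / real (Suc n) ^ k)"
    unfolding zeta_def by (simp add: powr_realpow)
  thus ?thesis using summ_suc[OF k] by (simp add: summable_sums)
qed

lemma summ_odd: "k \<ge> 2 \<Longrightarrow> summable (\<lambda>m. 1 / (2 * real m + 1) ^ k)"
proof -
  assume k: "k \<ge> 2"
  show ?thesis
  proof (rule summable_comparison_test'[OF summ_suc[OF k]])
    fix n :: nat assume "n \<ge> 0"
    have "real (Suc n) ^ k \<le> (2 * real n + 1) ^ k" by (intro power_mono) auto
    moreover have "0 < real (Suc n) ^ k" by simp
    ultimately show "norm (1 / (2 * real n + 1) ^ k) \<le> 1 / real (Suc n) ^ k"
      by (simp add: frac_le)
  qed
qed

lemma sumL: "k \<ge> 2 \<Longrightarrow> (\<lambda>m. 1 / (2 * real m + 1) ^ k) sums dlambda (real k)"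
proof -
  assume k: "k \<ge> 2"
  have "dlambda (real k) = (\<Sum>m. 1 / (2 * real m + 1) ^ k)"
    unfolding dlambda_def by (simp add: powr_realpow add_pos_nonneg)
  thus ?thesis using summ_odd[OF k] by (simp add: summable_sums)
qed

lemma lemA: "(\<lambda>m. 1 / (2 * real m + 1 + 2 * real n) ^ 2) sums
   (dlambda 2 - (\<Sum>i<n. 1 / (2 * real i + 1) ^ 2))"
proof -
  let ?f = "\<lambda>m. 1 / (2 * real m + 1) ^ 2 :: real"
  have "?f sums ((dlambda 2 - (\<Sum>i<n. ?f i)) + (\<Sum>i<n. ?f i))"
    using sumL[of 2] by simp
  hence "(\<lambda>i. ?f (i + n)) sums (dlambda 2 - (\<Sum>i<n. ?f i))"
    by (subst sums_iff_shift)
  thus ?thesis by (simp add: algebra_simps)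
qed

lemma lemB: "(\<lambda>m. 1 / (2 * real m + 1 - 2 * real n) ^ 2) sums
   (dlambda 2 + (\<Sum>i<n. 1 / (2 * real i + 1) ^ 2))"
proof -
  let ?f = "\<lambda>m. 1 / (2 * real m + 1 - 2 * real n) ^ 2 :: real"
  let ?g = "\<lambda>m. 1 / (2 * real m + 1) ^ 2 :: real"
  have "(\<lambda>i. ?f (i + n)) = ?g" by (simp add: algebra_simps)
  hence "(\<lambda>i. ?f (i + n)) sums dlambda 2" using sumL[of 2] by simp
  hence 1: "?f sums (dlambda 2 + (\<Sum>i<n. ?f i))" by (subst sums_iff_shift[symmetric])
  have "(\<Sum>i<n. ?f i) = (\<Sum>i<n. ?g (n - Suc i))"
  proof (rule sum.cong)
    fix i assume "i \<in> {..<n}"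
    hence "real (n - Suc i) = real n - real i - 1" by (simp add: of_nat_diff)
    thus "?f i = ?g (n - Suc i)" by (simp add: power2_eq_square algebra_simps)
  qed simp
  also have "\<dots> = (\<Sum>i<n. ?g i)" by (rule sum.nat_diff_reindex)
  finally show ?thesis using 1 by simp
qed

lemma Sodd: "S_odd 2 n = (\<Sum>i<n. 1 / (2 * real i + 1) ^ 2)"
  unfolding S_odd_def by (induction n) (auto simp: algebra_simps)

lemma lemR: "(\<Sum>t<2*m+1. 1 / (2 * real t + 1 - 2 * real m)) = 1 / (2 * real m + 1)"
proof -
  let ?A = "(\<Sum>t<2*m+1. 1 / (2 * real t + 1 - 2 * real m))"
  let ?g = "\<lambda>t. 1 / (2 * real t + 1 - 2 * real m)"
  have "?A = (\<Sum>t<2*m+1. ?g (2*m+1 - Suc t))" by (rule sum.nat_diff_reindex[symmetric])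
  also have "\<dots> = (\<Sum>t<2*m+1. 1 / (2 * real m + 1 - 2 * real t))"
  proof (rule sum.cong)
    fix t assume "t \<in> {..<2*m+1}"
    hence "real (2*m+1 - Suc t) = 2 * real m - real t" by (simp add: of_nat_diff)
    thus "?g (2*m+1 - Suc t) = 1 / (2 * real m + 1 - 2 * real t)" by (simp add: algebra_simps)
  qed simp
  also have "\<dots> = 1 / (2 * real m + 1) + (\<Sum>t<2*m. 1 / (2 * real m + 1 - 2 * real (Suc t)))"
    unfolding Suc_eq_plus1[symmetric] by (subst sum.lessThan_Suc_shift) simp
  also have "(\<Sum>t<2*m. 1 / (2 * real m + 1 - 2 * real (Suc t))) = - (\<Sum>t<2*m. ?g t)"
    by (simp add: sum_negf[symmetric] algebra_simps minus_divide_right)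
  also have "(\<Sum>t<2*m. ?g t) = ?A - ?g (2*m)" by simp
  finally have "?A = 2 / (2 * real m + 1) - ?A" by (simp add: algebra_simps)
  thus ?thesis by simp
qed


lemma u_lim: "(\<lambda>n::nat. 1 / (2 * real (n + c) - 2 * real m - 1)) \<longlonglongrightarrow> 0"
proof -
  have "filterlim (\<lambda>n::nat. (2 * real c - 2 * real m - 1) + 2 * real n) at_top sequentially"
    by (rule filterlim_tendsto_add_at_top[OF tendsto_const])
       (rule filterlim_tendsto_pos_mult_at_top[OF tendsto_const _ filterlim_real_sequentially], simp)
  hence "filterlim (\<lambda>n::nat. 2 * real (n + c) - 2 * real m - 1) at_top sequentially"
    by (simp add: algebra_simps)
  thus ?thesis by (rule tendsto_divide_0[OF tendsto_const filterlim_at_top_imp_at_infinity])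
qed

lemma lemT: "(\<lambda>n. 1 / (2 * real (Suc n) + (2 * real m + 1)) - 1 / (2 * real (Suc n) - (2 * real m + 1)))
    sums (- 1 / (2 * real m + 1))"
proof -
  define u where "u i = 1 / (2 * real i - 2 * real m - 1)" for i
  define K where "K = 2*m+1"
  define v where "v n = (\<Sum>t<K. u (n+1+t))" for n
  have step: "v (Suc n) - v n = u (n+1+K) - u (n+1)" for n
  proof -
    have "(\<Sum>t<Suc K. u (n+1+t)) = u (n+1) + (\<Sum>t<K. u (n+1+Suc t))"
      by (subst sum.lessThan_Suc_shift) simp
    moreover have "(\<Sum>t<Suc K. u (n+1+t)) = (\<Sum>t<K. u (n+1+t)) + u (n+1+K)" by simp
    ultimately show ?thesis unfolding v_def by simp
  qed
  have ut: "(\<lambda>n. u (n+1+t)) \<longlonglongrightarrow> 0" for t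
    using u_lim[of "1+t" m] unfolding u_def by (simp add: add.assoc)
  have "v \<longlonglongrightarrow> (\<Sum>t<K. 0)" unfolding v_def
    by (intro tendsto_sum) (use ut in auto)
  hence "(\<lambda>n. v (Suc n) - v n) sums (0 - v 0)" using telescope_sums[of v 0] by simp
  moreover have "v 0 = 1 / (2 * real m + 1)"
  proof -
    have "v 0 = (\<Sum>t<2*m+1. 1 / (2 * real t + 1 - 2 * real m))"
      unfolding v_def u_def K_def by (intro sum.cong) (auto simp: algebra_simps)
    thus ?thesis using lemR by simp
  qed
  moreover have "v (Suc n) - v n = 1 / (2 * real (Suc n) + (2 * real m + 1)) - 1 / (2 * real (Suc n) - (2 * real m + 1))" for n
    unfolding step u_def K_def by (simp add: algebra_simps)
  ultimately show ?thesis by simp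
qed


lemma keyidU:
  fixes u w B :: real
  assumes "u \<noteq> 0" "w \<noteq> 0" "u+w \<noteq> 0" "u-w \<noteq> 0"
  shows "((1/u^2 + 1/w^2) + (2*B+1) / ((u-w)/2) * (1/u - 1/w)) / ((u+w)/4)^2
   = 4*(B+1) / (((u-w)/2)^2 * ((u+w)/4)^2) + 4 / ((u-w)/2)^2 * (1/u^2 + 1/w^2)
     + 4*(2*B+3) / ((u-w)/2)^3 * (1/u - 1/w)"
  using assms by (simp add: field_simps) algebra

lemma keyid0:
  fixes n p B :: real
  assumes "n \<noteq> 0" "p \<noteq> 0" "2*n+p \<noteq> 0" "2*n-p \<noteq> 0"
  shows "((1/(2*n+p)^2 + 1/(2*n-p)^2) + (2*B+1) / p * (1/(2*n+p) - 1/(2*n-p))) / n^2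
   = 4*(B+1) / (p^2 * n^2) + 4 / p^2 * (1/(2*n+p)^2 + 1/(2*n-p)^2)
     + 4*(2*B+3) / p^3 * (1/(2*n+p) - 1/(2*n-p))"
proof -
  have e1: "n = ((2*n+p)+(2*n-p))/4" and e2: "p = ((2*n+p)-(2*n-p))/2" by simp_all
  have "(2*n+p)+(2*n-p) \<noteq> 0" "(2*n+p)-(2*n-p) \<noteq> 0" using assms by simp_all
  from keyidU[OF assms(3,4) this, of B] show ?thesis by (simp only: e1[symmetric] e2[symmetric])
qed

lemma keyid:
  fixes n p P T B :: real
  assumes "n \<noteq> 0" "p \<noteq> 0" "2*n+p \<noteq> 0" "2*n-p \<noteq> 0" "P \<noteq> 0"
  shows "(T / P * (1/(2*n+p)^2 + 1/(2*n-p)^2) + (2*B+1) * T / (P*p) * (1/(2*n+p) - 1/(2*n-p))) / n^2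
   = (B+1) * (4*T) / ((P*p^2) * n^2) + (4*T) / (P*p^2) * (1/(2*n+p)^2 + 1/(2*n-p)^2)
     + (2*B+3) * (4*T) / (P*p^3) * (1/(2*n+p) - 1/(2*n-p))"
proof -
  have g1: "T / P * A + (2*B+1) * T / (P*p) * C = T/P * (A + (2*B+1) / p * C)" for A C
    using assms by (simp add: field_simps)
  have g2: "(B+1) * (4*T) / ((P*p^2) * n^2) + (4*T) / (P*p^2) * A + (2*B+3) * (4*T) / (P*p^3) * C
     = T/P * (4*(B+1) / (p^2 * n^2) + 4 / p^2 * A + 4*(2*B+3) / p^3 * C)" for A C
    using assms by (simp add: field_simps)
  have g3: "(T/P * X)/n^2 = T/P*(X/n^2)" for X by (rule times_divide_eq_right[symmetric])
  show ?thesis unfolding g1 g2 g3 keyid0[OF assms(1-4), of B] ..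
qed


lemma baseU:
  fixes u w N P :: real
  assumes "u \<noteq> 0" "w \<noteq> 0" "N \<noteq> 0" "P \<noteq> 0" "4*N = u+w" "2*P = u-w"
  shows "1/(w^2*N) - 1/(u^2*N) = 2/P*(1/u^2+1/w^2) + 2/P^2*(1/u - 1/w)"
proof -
  show ?thesis using assms by (simp add: field_simps) algebra
qed

lemma base0:
  fixes n p :: real
  assumes "n \<noteq> 0" "p \<noteq> 0" "2*n+p \<noteq> 0" "2*n-p \<noteq> 0"
  shows "1/((p-2*n)^2 * n) - 1/((p+2*n)^2 * n) = 2/p * (1/(2*n+p)^2 + 1/(2*n-p)^2) + 2/p^2 * (1/(2*n+p) - 1/(2*n-p))"
proof -
  have e1: "n = ((2*n+p)+(2*n-p))/4" and e2: "p = ((2*n+p)-(2*n-p))/2" by simp_all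
  have "(2*n+p)+(2*n-p) \<noteq> 0" "(2*n+p)-(2*n-p) \<noteq> 0" using assms by simp_all
  have
   "1/((2*n-p)^2*n) - 1/((2*n+p)^2*n) = 2/p * (1/(2*n+p)^2 + 1/(2*n-p)^2) + 2/p^2 * (1/(2*n+p) - 1/(2*n-p))"
    by (rule baseU) (use assms in simp_all)
  moreover have "(p-2*n)^2 = (2*n-p)^2" "p+2*n = 2*n+p" by (simp_all add: power2_commute)
  ultimately show ?thesis by (simp only:)
qed

lemma PF:
  fixes n p :: real
  assumes nz: "n \<noteq> 0" "p \<noteq> 0" "2*n+p \<noteq> 0" "2*n-p \<noteq> 0"
  shows "1/((p-2*n)^2 * n^(2*b+1)) - 1/((p+2*n)^2 * n^(2*b+1)) =
   (\<Sum>j=1..b. real j * 2^(2*j+1) / (p^(2*j+1) * n^(2*b+2-2*j)))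
   + 2^(2*b+1)/p^(2*b+1) * (1/(2*n+p)^2 + 1/(2*n-p)^2)
   + real (2*b+1) * 2^(2*b+1) / p^(2*b+2) * (1/(2*n+p) - 1/(2*n-p))"
proof (induction b)
  case 0
  show ?case using base0[OF nz] by (simp add: power2_eq_square)
next
  case (Suc b)
  let ?Q2 = "1/(2*n+p)^2 + 1/(2*n-p)^2" and ?Q1 = "1/(2*n+p) - 1/(2*n-p)"
  let ?f = "\<lambda>b j. real j * 2^(2*j+1) / (p^(2*j+1) * n^(2*b+2-2*j))"
  have L: "1/((p-2*n)^2 * n^(2*Suc b+1)) - 1/((p+2*n)^2 * n^(2*Suc b+1))
      = (1/((p-2*n)^2 * n^(2*b+1)) - 1/((p+2*n)^2 * n^(2*b+1))) / n^2"
  proof -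
    have e: "n^(2*Suc b+1) = n^(2*b+1)*n^2" by (simp add: power_add[symmetric])
    have h: "1/(A*(X*Y)) = 1/(A*X)/Y" for A X Y :: real by (simp add: mult.assoc)
    show ?thesis unfolding e h diff_divide_distrib ..
  qed
  have S: "(\<Sum>j=1..Suc b. ?f (Suc b) j) = (\<Sum>j=1..b. ?f b j) / n^2 + ?f (Suc b) (Suc b)"
  proof -
    have "(\<Sum>j=1..b. ?f (Suc b) j) = (\<Sum>j=1..b. ?f b j / n^2)"
    proof (rule sum.cong)
      fix j assume "j \<in> {1..b}"
      hence "2*Suc b+2-2*j = (2*b+2-2*j) + 2" by auto
      hence e: "n^(2*Suc b+2-2*j) = n^(2*b+2-2*j) * n^2" by (simp only: power_add)
      have h: "A/(P*(X*Y)) = A/(P*X)/Y" for A P X Y :: real by (simp add: mult.assoc)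
      show "?f (Suc b) j = ?f b j / n^2" unfolding e h ..
    qed simp
    thus ?thesis by (simp add: sum_divide_distrib)
  qed
  have K: "(2^(2*b+1)/p^(2*b+1) * ?Q2 + real (2*b+1) * 2^(2*b+1) / p^(2*b+2) * ?Q1) / n^2
     = ?f (Suc b) (Suc b) + 2^(2*Suc b+1)/p^(2*Suc b+1) * ?Q2
       + real (2*Suc b+1) * 2^(2*Suc b+1) / p^(2*Suc b+2) * ?Q1"
  proof -
    have P: "p^(2*b+1) \<noteq> 0" using nz by simp
    have e: "p^(2*b+2) = p^(2*b+1)*p" "p^(2*Suc b+1) = p^(2*b+1)*p^2" "p^(2*Suc b+2) = p^(2*b+1)*p^3"
      "(2::real)^(2*Suc b+1) = 4*2^(2*b+1)" "n^(2*Suc b+2-2*Suc b) = n^2"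
      by (simp_all add: power_add power2_eq_square power3_eq_cube)
    show ?thesis using keyid[OF nz P, of "2^(2*b+1)" "real b"] unfolding e
      by (simp add: algebra_simps)
  qed
  show ?case unfolding L Suc.IH S
    using K by (simp add: add_divide_distrib algebra_simps)
qed


lemma odd_ne: "2 * real (Suc n) - (2 * real m + 1) \<noteq> 0"
proof
  assume "2 * real (Suc n) - (2 * real m + 1) = 0"
  hence "real (2 * Suc n) = real (2*m+1)" by simp
  hence "2 * Suc n = 2*m+1" by (simp only: of_nat_eq_iff)
  thus False by presburger
qed

lemma inner:
  fixes m b :: nat
  defines "p \<equiv> 2 * real m + 1"
  shows "(\<lambda>n. 1/((p - 2*real (Suc n))^2 * real (Suc n)^(2*b+1)) - 1/((p + 2*real (Suc n))^2 * real (Suc n)^(2*b+1)))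
  sums ((\<Sum>j=1..b. real j * 2^(2*j+1) * zeta (real (2*b+2-2*j)) / p^(2*j+1))
        + 2^(2*b+2) * dlambda 2 / p^(2*b+1) - real (b+1) * 2^(2*b+2) / p^(2*b+3))"
proof -
  let ?N = "\<lambda>n. real (Suc n)"
  let ?Q2 = "\<lambda>n. 1/(2*?N n+p)^2 + 1/(2*?N n-p)^2" and ?Q1 = "\<lambda>n. 1/(2*?N n+p) - 1/(2*?N n-p)"
  define C2 where "C2 = (2::real)^(2*b+1)/p^(2*b+1)"
  define C1 where "C1 = real (2*b+1) * (2::real)^(2*b+1) / p^(2*b+2)"
  have pp: "p > 0" unfolding p_def by simp
  have eq: "(\<lambda>n. 1/((p - 2*?N n)^2 * ?N n^(2*b+1)) - 1/((p + 2*?N n)^2 * ?N n^(2*b+1)))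
     = (\<lambda>n. (\<Sum>j=1..b. real j * 2^(2*j+1) / p^(2*j+1) * (1 / ?N n^(2*b+2-2*j))) + C2 * ?Q2 n + C1 * ?Q1 n)"
  proof
    fix n
    have a: "?N n \<noteq> 0" "p \<noteq> 0" "2*?N n+p \<noteq> 0" "2*?N n-p \<noteq> 0"
      using pp odd_ne[of n m] unfolding p_def by auto
    show "1/((p - 2*?N n)^2 * ?N n^(2*b+1)) - 1/((p + 2*?N n)^2 * ?N n^(2*b+1))
       = (\<Sum>j=1..b. real j * 2^(2*j+1) / p^(2*j+1) * (1 / ?N n^(2*b+2-2*j))) + C2 * ?Q2 n + C1 * ?Q1 n"
      unfolding PF[OF a, of b] C2_def C1_def by simp
  qed
  have s1: "(\<lambda>n. \<Sum>j=1..b. real j * 2^(2*j+1) / p^(2*j+1) * (1 / ?N n^(2*b+2-2*j)))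
      sums (\<Sum>j=1..b. real j * 2^(2*j+1) / p^(2*j+1) * zeta (real (2*b+2-2*j)))"
  proof (rule sums_sum)
    fix j assume "j \<in> {1..b}"
    hence "2*b+2-2*j \<ge> 2" by auto
    from sums_mult[OF sumZ[OF this]]
    show "(\<lambda>n. real j * 2^(2*j+1) / p^(2*j+1) * (1 / ?N n^(2*b+2-2*j))) sums
      (real j * 2^(2*j+1) / p^(2*j+1) * zeta (real (2*b+2-2*j)))" .
  qed
  have s2a: "(\<lambda>n. 1/(2*?N n+p)^2) sums (dlambda 2 - (\<Sum>i<Suc m. 1 / (2 * real i + 1) ^ 2))"
  proof -
    have "(\<lambda>n. 1/(2*?N n+p)^2) = (\<lambda>n. 1 / (2 * real n + 1 + 2 * real (Suc m)) ^ 2)"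
      unfolding p_def by (simp add: algebra_simps)
    thus ?thesis using lemA[of "Suc m"] by simp
  qed
  have s2b: "(\<lambda>n. 1/(2*?N n-p)^2) sums (dlambda 2 + (\<Sum>i<m. 1 / (2 * real i + 1) ^ 2))"
  proof -
    have "(\<lambda>n. 1/(2*?N n-p)^2) = (\<lambda>n. 1 / (2 * real n + 1 - 2 * real m) ^ 2)"
      unfolding p_def by (simp add: algebra_simps)
    thus ?thesis using lemB[of m] by simp
  qed
  have s2: "?Q2 sums (2 * dlambda 2 - 1/p^2)"
    using sums_add[OF s2a s2b] unfolding p_def by simp
  have s3: "?Q1 sums (-1/p)" using lemT[of m] unfolding p_def .
  have all: "(\<lambda>n. (\<Sum>j=1..b. real j * 2^(2*j+1) / p^(2*j+1) * (1 / ?N n^(2*b+2-2*j))) + C2 * ?Q2 n + C1 * ?Q1 n)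
     sums ((\<Sum>j=1..b. real j * 2^(2*j+1) / p^(2*j+1) * zeta (real (2*b+2-2*j))) + C2 * (2 * dlambda 2 - 1/p^2) + C1 * (-1/p))"
    by (intro sums_add s1 sums_mult s2 s3)
  have val: "(\<Sum>j=1..b. real j * 2^(2*j+1) / p^(2*j+1) * zeta (real (2*b+2-2*j))) + C2 * (2 * dlambda 2 - 1/p^2) + C1 * (-1/p)
     = (\<Sum>j=1..b. real j * 2^(2*j+1) * zeta (real (2*b+2-2*j)) / p^(2*j+1))
        + 2^(2*b+2) * dlambda 2 / p^(2*b+1) - real (b+1) * 2^(2*b+2) / p^(2*b+3)"
  proof -
    have "C2 * (2 * dlambda 2 - 1/p^2) + C1 * (-1/p) = 2^(2*b+2) * dlambda 2 / p^(2*b+1) - real (b+1) * 2^(2*b+2) / p^(2*b+3)"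
    proof -
      have e1: "p^(2*b+2) = p^(2*b+1)*p" using power_Suc2[of p "2*b+1"] by simp
      have e2: "p^(2*b+3) = p^(2*b+1)*p^2" unfolding power_add[symmetric] by (simp add: numeral_3_eq_3)
      have e3: "(2::real)^(2*b+2) = 2*2^(2*b+1)" using power_Suc[of "2::real" "2*b+1"] by simp
      note e = e1 e2 e3
      have X: "p^(2*b+1) \<noteq> 0" using pp by simp
      have aux: "T/X*(2*L - 1/p^2) + (2*B+1)*T/(X*p)*(-1/p) = 2*T*L/X - (B+1)*(2*T)/(X*p^2)"
        if "X \<noteq> 0" for X T L B :: real
        using that pp by (simp add: field_simps power2_eq_square)
      show ?thesis unfolding C2_def C1_def e using aux[OF X, of "2^(2*b+1)" "dlambda 2" "real b"]
        by (simp add: mult.assoc add.commute)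
    qed
    moreover have "(\<Sum>j=1..b. real j * 2^(2*j+1) / p^(2*j+1) * zeta (real (2*b+2-2*j)))
       = (\<Sum>j=1..b. real j * 2^(2*j+1) * zeta (real (2*b+2-2*j)) / p^(2*j+1))"
      by (intro sum.cong) auto
    ultimately show ?thesis by simp
  qed
  show ?thesis using all unfolding eq[symmetric] val .
qed


lemma zeta2: "zeta 2 = 4/3 * dlambda 2"
proof -
  let ?f = "\<lambda>n. 1 / real (Suc n) ^ 2"
  have z: "?f sums zeta 2" using sumZ[of 2] by simp
  from sums_group[OF z, of 2] have "(\<lambda>n. sum ?f {n*2..<n*2+2}) sums zeta 2" by simp
  moreover have "(\<lambda>n. sum ?f {n*2..<n*2+2}) = (\<lambda>n. 1 / (2 * real n + 1) ^ 2 + 1/4 * ?f n)"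
  proof
    fix n
    have "{n*2..<n*2+2} = {n*2, n*2+(1::nat)}" by auto
    thus "sum ?f {n*2..<n*2+2} = 1 / (2 * real n + 1) ^ 2 + 1/4 * ?f n"
      by (simp add: field_simps power2_eq_square)
  qed
  ultimately have "(\<lambda>n. 1 / (2 * real n + 1) ^ 2 + 1/4 * ?f n) sums zeta 2" by simp
  moreover have "(\<lambda>n. 1 / (2 * real n + 1) ^ 2 + 1/4 * ?f n) sums (dlambda 2 + 1/4 * zeta 2)"
    using sums_add[OF sumL[of 2] sums_mult[OF z, of "1/4"]] by simp
  ultimately have "zeta 2 = dlambda 2 + 1/4 * zeta 2" using sums_unique2 by blast
  thus ?thesis by simp
qed

lemma Sle: "0 \<le> (\<Sum>i<k. 1 / (2 * real i + 1) ^ 2) \<and> (\<Sum>i<k. 1 / (2 * real i + 1) ^ 2) \<le> dlambda 2"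
proof
  show "0 \<le> (\<Sum>i<k. 1 / (2 * real i + 1) ^ 2)" by (intro sum_nonneg) simp
  have "dlambda 2 = (\<Sum>i. 1 / (2 * real i + 1) ^ 2)" using sumL[of 2] by (simp add: sums_iff)
  thus "(\<Sum>i<k. 1 / (2 * real i + 1) ^ 2) \<le> dlambda 2"
    using sum_le_suminf[of "\<lambda>i. 1 / (2 * real i + 1) ^ 2" "{..<k}"] summ_odd[of 2] by simp
qed

theorem mainB:
  fixes b :: nat
  assumes "b \<ge> 1"
  shows "sigma (2*b+1) 2 = (\<Sum>j=1..b. real j * 2^(2*j) * zeta (real (2*b+2-2*j)) * dlambda (real (2*j+1)))
     + 2^(2*b+1) * dlambda 2 * dlambda (real (2*b+1)) - real (b+1) * 2^(2*b+1) * dlambda (real (2*b+3))"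
proof -
  let ?N = "\<lambda>n. real (Suc n)"
  let ?S = "\<lambda>k. (\<Sum>i<k. 1 / (2 * real i + 1) ^ 2)"
  define F where "F n m = 1/((2*real m+1 - 2*?N n)^2 * ?N n^(2*b+1))" for n m
  define G where "G n m = 1/((2*real m+1 + 2*?N n)^2 * ?N n^(2*b+1))" for n m
  define rF where "rF n = (dlambda 2 + ?S (Suc n)) / ?N n^(2*b+1)" for n
  define rG where "rG n = (dlambda 2 - ?S (Suc n)) / ?N n^(2*b+1)" for n
  define t where "t n = ?S (Suc n) / ?N n^(2*b+1)" for n
  have sb: "summable (\<lambda>n. 1 / ?N n^(2*b+1))" by (rule summ_suc) (use assms in simp)
  have st: "summable t"
  proof (rule summable_comparison_test'[OF summable_mult[OF sb, of "dlambda 2"]])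
    fix n :: nat assume "n \<ge> 0"
    show "norm (t n) \<le> dlambda 2 * (1 / ?N n^(2*b+1))"
      unfolding t_def using Sle[of "Suc n"] by (simp add: divide_right_mono)
  qed
  have sig: "t sums sigma (2*b+1) 2"
    using st unfolding sigma_def t_def Sodd by (simp add: summable_sums)
  have rFe: "rF = (\<lambda>n. dlambda 2 * (1 / ?N n^(2*b+1)) + t n)" unfolding rF_def t_def
    by (simp add: add_divide_distrib)
  have rGe: "rG = (\<lambda>n. dlambda 2 * (1 / ?N n^(2*b+1)) - t n)" unfolding rG_def t_def
    by (simp add: diff_divide_distrib)
  have srF: "summable rF" unfolding rFe by (intro summable_add summable_mult sb st)
  have srG: "summable rG" unfolding rGe by (intro summable_diff summable_mult sb st)
  have Fs: "(F n) sums rF n" for n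
  proof -
    have "(\<lambda>m. 1 / (2 * real m + 1 - 2 * ?N n) ^ 2 / ?N n^(2*b+1)) sums rF n"
      unfolding rF_def by (rule sums_divide[OF lemB])
    thus ?thesis unfolding F_def by simp
  qed
  have Gs: "(G n) sums rG n" for n
  proof -
    have "(\<lambda>m. 1 / (2 * real m + 1 + 2 * ?N n) ^ 2 / ?N n^(2*b+1)) sums rG n"
      unfolding rG_def by (rule sums_divide[OF lemA])
    thus ?thesis unfolding G_def by simp
  qed
  have Fn: "F n m \<ge> 0" "G n m \<ge> 0" for n m unfolding F_def G_def by simp_all
  note swF = swap_sums[of F rF, OF Fn(1) Fs srF]
  note swG = swap_sums[of G rG, OF Fn(2) Gs srG]
  define V where "V m = (\<Sum>j=1..b. real j * 2^(2*j+1) * zeta (real (2*b+2-2*j)) / (2*real m+1)^(2*j+1))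
        + 2^(2*b+2) * dlambda 2 / (2*real m+1)^(2*b+1) - real (b+1) * 2^(2*b+2) / (2*real m+1)^(2*b+3)" for m
  have VS: "V m = (\<Sum>n. F n m) - (\<Sum>n. G n m)" for m
  proof -
    have "(\<lambda>n. F n m - G n m) sums V m" unfolding F_def G_def V_def by (rule inner)
    moreover have "(\<lambda>n. F n m - G n m) sums ((\<Sum>n. F n m) - (\<Sum>n. G n m))"
      by (intro sums_diff summable_sums swF(2) swG(2))
    ultimately show ?thesis using sums_unique2 by blast
  qed
  have V1: "V sums (suminf rF - suminf rG)" unfolding VS by (intro sums_diff swF(1) swG(1))
  have "suminf rF - suminf rG = 2 * sigma (2*b+1) 2"
  proof -
    have "(\<lambda>n. rF n - rG n) sums (2 * sigma (2*b+1) 2)"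
      unfolding rFe rGe using sums_mult[OF sig, of 2] by (simp add: algebra_simps)
    moreover have "(\<lambda>n. rF n - rG n) sums (suminf rF - suminf rG)"
      by (intro sums_diff summable_sums srF srG)
    ultimately show ?thesis using sums_unique2 by blast
  qed
  with V1 have V2: "V sums (2 * sigma (2*b+1) 2)" by simp
  have V3: "V sums ((\<Sum>j=1..b. real j * 2^(2*j+1) * zeta (real (2*b+2-2*j)) * dlambda (real (2*j+1)))
        + 2^(2*b+2) * dlambda 2 * dlambda (real (2*b+1)) - real (b+1) * 2^(2*b+2) * dlambda (real (2*b+3)))"
    unfolding V_def
  proof (intro sums_diff sums_add sums_sum)
    fix j assume "j \<in> {1..b}"
    have "(\<lambda>m. real j * 2^(2*j+1) * zeta (real (2*b+2-2*j)) * (1 / (2*real m+1)^(2*j+1))) sums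
        (real j * 2^(2*j+1) * zeta (real (2*b+2-2*j)) * dlambda (real (2*j+1)))"
      by (rule sums_mult[OF sumL]) (use \<open>j \<in> {1..b}\<close> in auto)
    thus "(\<lambda>m. real j * 2^(2*j+1) * zeta (real (2*b+2-2*j)) / (2*real m+1)^(2*j+1)) sums
        (real j * 2^(2*j+1) * zeta (real (2*b+2-2*j)) * dlambda (real (2*j+1)))" by simp
  next
    have "(\<lambda>m. 2^(2*b+2) * dlambda 2 * (1 / (2*real m+1)^(2*b+1))) sums (2^(2*b+2) * dlambda 2 * dlambda (real (2*b+1)))"
      by (rule sums_mult[OF sumL]) (use assms in auto)
    thus "(\<lambda>m. 2^(2*b+2) * dlambda 2 / (2*real m+1)^(2*b+1)) sums (2^(2*b+2) * dlambda 2 * dlambda (real (2*b+1)))"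
      by simp
  next
    have "(\<lambda>m. real (b+1) * 2^(2*b+2) * (1 / (2*real m+1)^(2*b+3))) sums (real (b+1) * 2^(2*b+2) * dlambda (real (2*b+3)))"
      by (rule sums_mult[OF sumL]) auto
    thus "(\<lambda>m. real (b+1) * 2^(2*b+2) / (2*real m+1)^(2*b+3)) sums (real (b+1) * 2^(2*b+2) * dlambda (real (2*b+3)))"
      by simp
  qed
  have e1: "(\<Sum>j=1..b. real j * 2^(2*j+1) * zeta (real (2*b+2-2*j)) * dlambda (real (2*j+1)))
     = 2 * (\<Sum>j=1..b. real j * 2^(2*j) * zeta (real (2*b+2-2*j)) * dlambda (real (2*j+1)))"
    unfolding sum_distrib_left by (intro sum.cong) auto
  have e2: "(2::real)^(2*b+2) = 2 * 2^(2*b+1)" "(2::real)^(2*b+1) = 2 * 2^(2*b)" by simp_all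
  from sums_unique2[OF V2 V3] show ?thesis unfolding e1 e2 by simp
qed


theorem mainTheorem7:
  fixes a :: nat
  assumes "a \<ge> 2"
  shows "sigma (2*a - 1) 2 =
    - real a * 2 ^ (2*a - 1) * dlambda (real (2*a + 1))
    + 2 ^ (2*a - 1) * real (2*a + 1) / 3 * dlambda 2 * dlambda (real (2*a - 1))
    + (\<Sum>j=1..a-2. real j * 2 ^ (2*j) * dlambda (real (2*j + 1)) * zeta (real (2*a - 2*j)))"
proof -
  obtain c where a: "a = c + 2" using assms by (metis add.commute le_Suc_ex)
  have M: "sigma (2*(c+1)+1) 2 = (\<Sum>j=1..c+1. real j * 2^(2*j) * zeta (real (2*(c+1)+2-2*j)) * dlambda (real (2*j+1)))
     + 2^(2*(c+1)+1) * dlambda 2 * dlambda (real (2*(c+1)+1)) - real (c+1+1) * 2^(2*(c+1)+1) * dlambda (real (2*(c+1)+3))"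
    by (rule mainB) simp
  have sp: "(\<Sum>j=1..c+1. real j * 2^(2*j) * zeta (real (2*(c+1)+2-2*j)) * dlambda (real (2*j+1)))
     = (\<Sum>j=1..c. real j * 2 ^ (2*j) * dlambda (real (2*j + 1)) * zeta (real (2*a - 2*j)))
       + real (c+1) * 2^(2*(c+1)) * zeta 2 * dlambda (real (2*(c+1)+1))"
  proof -
    have "(\<Sum>j=1..c+1. real j * 2^(2*j) * zeta (real (2*(c+1)+2-2*j)) * dlambda (real (2*j+1)))
      = (\<Sum>j=1..c. real j * 2^(2*j) * zeta (real (2*(c+1)+2-2*j)) * dlambda (real (2*j+1)))
        + real (c+1) * 2^(2*(c+1)) * zeta (real (2*(c+1)+2-2*(c+1))) * dlambda (real (2*(c+1)+1))"
      by (simp add: sum.cl_ivl_Suc)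
    moreover have "(\<Sum>j=1..c. real j * 2^(2*j) * zeta (real (2*(c+1)+2-2*j)) * dlambda (real (2*j+1)))
      = (\<Sum>j=1..c. real j * 2 ^ (2*j) * dlambda (real (2*j + 1)) * zeta (real (2*a - 2*j)))"
      unfolding a by (intro sum.cong) (auto simp: mult_ac)
    ultimately show ?thesis by simp
  qed
  have e: "2*a - 1 = 2*(c+1)+1" "a - 2 = c" "2*a+1 = 2*(c+1)+3" using a by simp_all
  have p: "(2::real)^(2*(c+1)+1) = 2 * 2^(2*(c+1))" by simp
  show ?thesis unfolding e M sp zeta2 p unfolding a
    by (simp add: field_simps)
qed

end
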